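(* Let $(X,d)$ be a locally compact metric space and let $\{A_n\}_{n\ge 1}$ be a sequence of closed, connected subsets of $X$ such that $A_1\supseteq A_2\supseteq\cdots$ and $\bigcap_{n=1}^{\infty}A_n$ is a nonempty compact subset of $X$. Then for every neighborhood $U$ of $\bigcap_{n=1}^{\infty}A_n$ there is a natural number $n$ with $A_n\subseteq U$. *)

theory Defs
  imports "HOL-Analysis.Analysis"
begin

end

theory Submission
  imports Defs
begin

theorem lemma3p2:
  fixes A :: "nat \<Rightarrow> 'a::metric_space set" and U :: "'a set"
  assumes lc: "locally_compact_space (euclidean :: 'a topology)"
    and cl: "\<And>n. n \<ge> 1 \<Longrightarrow> closed (A n)"
    and conn: "\<And>n. n \<ge> 1 \<Longrightarrow> connected (A n)"
    and dec: "\<And>n. n \<ge> 1 \<Longrightarrow> A (Suc n) \<subseteq> A n"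
    and ne: "(\<Inter>n\<in>{1..}. A n) \<noteq> {}"
    and cpt: "compact (\<Inter>n\<in>{1..}. A n)"
    and nbhd: "\<exists>V. open V \<and> (\<Inter>n\<in>{1..}. A n) \<subseteq> V \<and> V \<subseteq> U"
  shows "\<exists>n\<ge>1. A n \<subseteq> U"
proof (rule ccontr)
  assume nc: "\<not> (\<exists>n\<ge>1. A n \<subseteq> U)"
  define K where "K = (\<Inter>n\<in>{1..}. A n)"
  obtain V where V: "open V" "K \<subseteq> V" "V \<subseteq> U" using nbhd K_def by blast
  have "\<exists>W L. openin euclidean W \<and> compactin euclidean L \<and> closedin euclidean L \<and> K \<subseteq> W \<and> W \<subseteq> L"
    using lc cpt K_def locally_compact_space_compact_closed_compact[of "euclidean :: 'a topology"]
    by auto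
  then obtain W L where WL: "open W" "compact L" "K \<subseteq> W" "W \<subseteq> L" by auto
  define G where "G = V \<inter> W"
  have G: "open G" "K \<subseteq> G" "G \<subseteq> U" "G \<subseteq> L" using V WL G_def by auto
  have fc: "compact (frontier G)"
  proof -
    have "closure G \<subseteq> L" using G WL by (simp add: closure_minimal compact_imp_closed)
    then have "frontier G \<subseteq> L" using frontier_def by auto
    then show ?thesis using WL by (metis frontier_closed compact_Int_closed inf.absorb_iff2 inf_commute)
  qed
  have mono: "A n \<subseteq> A m" if "1 \<le> m" "m \<le> n" for m n
    using that(2,1)
  proof (induction n rule: dec_induct)
    case base then show ?case by simp
  next
    case (step k) then show ?case using dec[of k] by auto
  qed
  have meet: "frontier G \<inter> A n \<noteq> {}" if "n \<ge> 1" for n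
  proof -
    have "K \<subseteq> A n" using K_def that by auto
    then have "A n \<inter> G \<noteq> {}" using ne K_def G by blast
    moreover have "A n - G \<noteq> {}" using nc that G by blast
    ultimately show ?thesis using connected_Int_frontier[OF conn[OF that]] by blast
  qed
  have "frontier G \<inter> \<Inter>(A ` {1..}) \<noteq> {}"
  proof (rule compact_fip[THEN iffD1, OF fc, rule_format])
    show "\<And>a. a \<in> A ` {1..} \<Longrightarrow> closed a" using cl by auto
    fix B assume B: "B \<subseteq> A ` {1..}" "finite B"
    then obtain N where N: "finite N" "N \<subseteq> {1..}" "B = A ` N"
      by (meson finite_subset_image)
    define m where "m = Max (insert 1 N)"
    have m1: "m \<ge> 1" using N m_def by simp
    have "A m \<subseteq> \<Inter>B"
    proof
      fix x assume "x \<in> A m"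
      have "A m \<subseteq> A k" if "k \<in> N" for k
        using mono[of k m] that N m_def by auto
      then show "x \<in> \<Inter>B" using N \<open>x \<in> A m\<close> by auto
    qed
    then show "frontier G \<inter> \<Inter>B \<noteq> {}" using meet[OF m1] by blast
  qed
  then obtain x where "x \<in> frontier G" "x \<in> K" using K_def by auto
  then show False using G by (metis frontier_def interior_open DiffD2 subsetD)
qed

end
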